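(* Let $S$ be a monoid and $n\in\mathbb N$. If $A$ is an $n$-absolutely pure $S$-act and $B$ is $n$-built from $A$, then $A$ is a retract of $B$. Likewise, if $A$ is an absolutely pure $S$-act and $B$ is built from $A$, then $A$ is a retract of $B$.
   Context: A (right) $S$-act is a set with an action $(a,s)\mapsto as$ with $a1=a$, $a(st)=(as)t$. Equations over an $S$-act $C$ with variables from $X$ have the forms $xs=yt$, $xs=xt$, $xs=c$; a set of equations is consistent if it has a solution in some $S$-act containing $C$. For a set $\Sigma$ of equations over $C$, let $\kappa_\Sigma$ be the congruence on $C\sqcup F_S(X)$ ($F_S(X)$ the free $S$-act on $X$) generated by the pairs $(xu,yv)$ for $xu=yv\in\Sigma$ and $(xs,c)$ for $xs=c\in\Sigma$, and $C(\Sigma)=(C\sqcup F_S(X))/\kappa_\Sigma$; if $\Sigma$ is consistent, $C$ is identified with its image in $C(\Sigma)$ under $c\mapsto[c]$. $A$ is $n$-absolutely pure if every finite consistent set of equations over $A$ in at most $n$ variables has a solution in $A$, and absolutely pure if this holds for all $n$. $B\supseteq A$ is built (resp. $n$-built) from $A=A_0$ if $B=\bigcup_{0\le i\le\xi}A_i$ for some ordinal $\xi$, where for each $i<\xi$, $A_{i+1}=A_i(\Sigma_i)$ for some finite consistent set $\Sigma_i$ of equations over $A_i$ (resp. in at most $n$ variables), and for limit ordinals $\zeta\le\xi$, $A_\zeta=\bigcup_{i<\zeta}A_i$. $A$ is a retract of $B$ if there is an $S$-morphism $B\to A$ restricting to the identity on $A$. *)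

theory Defs
  imports Main
begin

definition is_act :: "'a set \<Rightarrow> ('a \<Rightarrow> 's::monoid_mult \<Rightarrow> 'a) \<Rightarrow> bool" where
  "is_act D act \<longleftrightarrow>
     (\<forall>a\<in>D. \<forall>s. act a s \<in> D) \<and> (\<forall>a\<in>D. act a 1 = a) \<and>
     (\<forall>a\<in>D. \<forall>s t. act a (s * t) = act (act a s) t)"

text \<open>Variables are natural numbers.  Eq_VV x s y t is the equation x s = y t
  (the case x = y gives x s = x t); Eq_VC x s c is the equation x s = c.\<close>
datatype ('s, 'a) eqn = Eq_VV nat 's nat 's | Eq_VC nat 's 'a

fun eqn_vars :: "('s, 'a) eqn \<Rightarrow> nat set" where
  "eqn_vars (Eq_VV x s y t) = {x, y}"
| "eqn_vars (Eq_VC x s c) = {x}"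

definition vars :: "('s, 'a) eqn set \<Rightarrow> nat set" where
  "vars Sig = (\<Union>q\<in>Sig. eqn_vars q)"

fun eqn_consts :: "('s, 'a) eqn \<Rightarrow> 'a set" where
  "eqn_consts (Eq_VV x s y t) = {}"
| "eqn_consts (Eq_VC x s c) = {c}"

definition eqns_over :: "'a set \<Rightarrow> ('s, 'a) eqn set \<Rightarrow> bool" where
  "eqns_over C Sig \<longleftrightarrow> (\<forall>q\<in>Sig. eqn_consts q \<subseteq> C)"

fun sat :: "('d \<Rightarrow> 's \<Rightarrow> 'd) \<Rightarrow> (nat \<Rightarrow> 'd) \<Rightarrow> ('a \<Rightarrow> 'd) \<Rightarrow> ('s, 'a) eqn \<Rightarrow> bool" where
  "sat act \<sigma> e (Eq_VV x s y t) = (act (\<sigma> x) s = act (\<sigma> y) t)"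
| "sat act \<sigma> e (Eq_VC x s c) = (act (\<sigma> x) s = e c)"

text \<open>The witness act is taken on the type 'a + nat * 's, which is
  big enough: the subact generated by C and a solution is a quotient of
  C + F_S(vars Sig), hence injects into this type.\<close>
definition consistent :: "'a set \<Rightarrow> ('a \<Rightarrow> 's::monoid_mult \<Rightarrow> 'a) \<Rightarrow> ('s, 'a) eqn set \<Rightarrow> bool" where
  "consistent C act Sig \<longleftrightarrow>
     (\<exists>(D :: ('a + nat \<times> 's) set) actD e \<sigma>.
        is_act D actD \<and> e ` C \<subseteq> D \<and> inj_on e C \<and>
        (\<forall>c\<in>C. \<forall>s. e (act c s) = actD (e c) s) \<and>
        (\<forall>x\<in>vars Sig. \<sigma> x \<in> D) \<and> (\<forall>q\<in>Sig. sat actD \<sigma> e q))"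

definition has_solution_in :: "'a set \<Rightarrow> ('a \<Rightarrow> 's \<Rightarrow> 'a) \<Rightarrow> ('s, 'a) eqn set \<Rightarrow> bool" where
  "has_solution_in A act Sig \<longleftrightarrow>
     (\<exists>\<sigma>. (\<forall>x\<in>vars Sig. \<sigma> x \<in> A) \<and> (\<forall>q\<in>Sig. sat act \<sigma> id q))"

definition n_absolutely_pure :: "nat \<Rightarrow> 'a set \<Rightarrow> ('a \<Rightarrow> 's::monoid_mult \<Rightarrow> 'a) \<Rightarrow> bool" where
  "n_absolutely_pure n A act \<longleftrightarrow>
     (\<forall>Sig :: ('s, 'a) eqn set. finite Sig \<and> eqns_over A Sig \<and> card (vars Sig) \<le> n \<and>
        consistent A act Sig \<longrightarrow> has_solution_in A act Sig)"

definition absolutely_pure :: "'a set \<Rightarrow> ('a \<Rightarrow> 's::monoid_mult \<Rightarrow> 'a) \<Rightarrow> bool" where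
  "absolutely_pure A act \<longleftrightarrow> (\<forall>n. n_absolutely_pure n A act)"

text \<open>C + F_S(X), with X = vars Sig; F_S(X) is X * S, (x,u) standing for x u.\<close>
definition sum_carrier :: "'a set \<Rightarrow> ('s, 'a) eqn set \<Rightarrow> ('a + nat \<times> 's) set" where
  "sum_carrier C Sig = Inl ` C \<union> Inr ` (vars Sig \<times> UNIV)"

fun sum_act :: "('a \<Rightarrow> 's::monoid_mult \<Rightarrow> 'a) \<Rightarrow> 'a + nat \<times> 's \<Rightarrow> 's \<Rightarrow> 'a + nat \<times> 's" where
  "sum_act act (Inl c) s = Inl (act c s)"
| "sum_act act (Inr (x, u)) s = Inr (x, u * s)"

definition is_congruence :: "'b set \<Rightarrow> ('b \<Rightarrow> 's \<Rightarrow> 'b) \<Rightarrow> ('b \<times> 'b) set \<Rightarrow> bool" where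
  "is_congruence U act R \<longleftrightarrow> equiv U R \<and> (\<forall>(a, b)\<in>R. \<forall>s. (act a s, act b s) \<in> R)"

fun gen_pair :: "('s, 'a) eqn \<Rightarrow> ('a + nat \<times> 's) \<times> ('a + nat \<times> 's)" where
  "gen_pair (Eq_VV x u y v) = (Inr (x, u), Inr (y, v))"
| "gen_pair (Eq_VC x s c) = (Inr (x, s), Inl c)"

definition kappa :: "'a set \<Rightarrow> ('a \<Rightarrow> 's::monoid_mult \<Rightarrow> 'a) \<Rightarrow> ('s, 'a) eqn set
                     \<Rightarrow> (('a + nat \<times> 's) \<times> ('a + nat \<times> 's)) set" where
  "kappa C act Sig = \<Inter> {R. is_congruence (sum_carrier C Sig) (sum_act act) R \<and> gen_pair ` Sig \<subseteq> R}"

text \<open>D (a subset of the ambient act, with the ambient action act) is C(Sigma),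
  with C identified with its image c \<mapsto> [c]: there is a surjective
  S-morphism f from C + F_S(X) onto D whose kernel is exactly kappa_Sigma
  (so f induces an isomorphism C(Sigma) \<cong> D) and which sends c to c.\<close>
definition is_extension :: "'a set \<Rightarrow> ('a \<Rightarrow> 's::monoid_mult \<Rightarrow> 'a) \<Rightarrow> ('s, 'a) eqn set \<Rightarrow> 'a set \<Rightarrow> bool" where
  "is_extension C act Sig D \<longleftrightarrow>
     (\<exists>f :: 'a + nat \<times> 's \<Rightarrow> 'a.
        f ` sum_carrier C Sig = D \<and>
        (\<forall>u\<in>sum_carrier C Sig. \<forall>v\<in>sum_carrier C Sig. f u = f v \<longleftrightarrow> (u, v) \<in> kappa C act Sig) \<and>
        (\<forall>u\<in>sum_carrier C Sig. \<forall>s. f (sum_act act u s) = act (f u) s) \<and>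
        (\<forall>c\<in>C. f (Inl c) = c))"

text \<open>A chain (A_i) indexed by a well-ordered type 'i (playing the role of the
  ordinals 0..xi), with admissible equation sets given by ok.
  A_least = A; A_(i+1) = A_i(Sigma_i) with Sigma_i finite, consistent, over A_i, ok;
  limit stages are unions; B is the union of all stages.\<close>
definition built_chain ::
  "(('s, 'a) eqn set \<Rightarrow> bool) \<Rightarrow> 'a set \<Rightarrow> 'a set \<Rightarrow> ('a \<Rightarrow> 's::monoid_mult \<Rightarrow> 'a)
     \<Rightarrow> ('i::wellorder \<Rightarrow> 'a set) \<Rightarrow> bool" where
  "built_chain ok A B act Ai \<longleftrightarrow>
     (\<forall>i. (\<forall>j. i \<le> j) \<longrightarrow> Ai i = A) \<and>
     (\<forall>i j. i < j \<and> (\<forall>k. i < k \<longrightarrow> j \<le> k) \<longrightarrow>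
        (\<exists>Sig. finite Sig \<and> ok Sig \<and> eqns_over (Ai i) Sig \<and> consistent (Ai i) act Sig \<and>
               is_extension (Ai i) act Sig (Ai j))) \<and>
     (\<forall>j. (\<exists>i. i < j) \<and> (\<forall>i<j. \<exists>k. i < k \<and> k < j) \<longrightarrow> Ai j = (\<Union>i\<in>{i. i < j}. Ai i)) \<and>
     B = (\<Union>i. Ai i)"

definition n_built_chain ::
  "nat \<Rightarrow> 'a set \<Rightarrow> 'a set \<Rightarrow> ('a \<Rightarrow> 's::monoid_mult \<Rightarrow> 'a) \<Rightarrow> ('i::wellorder \<Rightarrow> 'a set) \<Rightarrow> bool" where
  "n_built_chain n = built_chain (\<lambda>Sig. card (vars Sig) \<le> n)"

definition any_built_chain ::
  "'a set \<Rightarrow> 'a set \<Rightarrow> ('a \<Rightarrow> 's::monoid_mult \<Rightarrow> 'a) \<Rightarrow> ('i::wellorder \<Rightarrow> 'a set) \<Rightarrow> bool" where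
  "any_built_chain = built_chain (\<lambda>Sig. True)"

definition is_retract :: "'a set \<Rightarrow> 'a set \<Rightarrow> ('a \<Rightarrow> 's \<Rightarrow> 'a) \<Rightarrow> bool" where
  "is_retract A B act \<longleftrightarrow>
     (\<exists>r. (\<forall>b\<in>B. r b \<in> A) \<and> (\<forall>b\<in>B. \<forall>s. r (act b s) = act (r b) s) \<and> (\<forall>a\<in>A. r a = a))"

end

theory Submission
  imports Defs
begin

definition retr :: "'a set \<Rightarrow> ('a \<Rightarrow> 's \<Rightarrow> 'a) \<Rightarrow> 'a set \<Rightarrow> ('a \<Rightarrow> 'a) \<Rightarrow> bool" where
  "retr A act D r \<longleftrightarrow> (\<forall>b\<in>D. r b \<in> A) \<and> (\<forall>b\<in>D. \<forall>s. r (act b s) = act (r b) s) \<and> (\<forall>a\<in>A. r a = a)"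

fun mapq :: "('a \<Rightarrow> 'a) \<Rightarrow> ('s, 'a) eqn \<Rightarrow> ('s, 'a) eqn" where
  "mapq r (Eq_VV x s y t) = Eq_VV x s y t"
| "mapq r (Eq_VC x s c) = Eq_VC x s (r c)"

lemma vars_mapq: "vars (mapq r ` Sig) = vars Sig"
proof -
  have "eqn_vars (mapq r q) = eqn_vars q" for q by (cases q) auto
  thus ?thesis unfolding vars_def by force
qed

lemma vars_sub: "q \<in> Sig \<Longrightarrow> eqn_vars q \<subseteq> vars Sig"
  unfolding vars_def by auto

lemma gen_in_kappa: "q \<in> Sig \<Longrightarrow> gen_pair q \<in> kappa C act Sig"
  unfolding kappa_def by auto

lemma sum_act_closed:
  assumes "is_act C act" "u \<in> sum_carrier C Sig"
  shows "sum_act act u s \<in> sum_carrier C Sig"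
  using assms unfolding sum_carrier_def is_act_def by auto

lemma sum_act_one:
  assumes "is_act C act" "u \<in> sum_carrier C Sig"
  shows "sum_act act u 1 = u"
  using assms unfolding sum_carrier_def is_act_def by auto

lemma sum_act_mult:
  assumes "is_act C act" "u \<in> sum_carrier C Sig"
  shows "sum_act act u (s * t) = sum_act act (sum_act act u s) t"
  using assms unfolding sum_carrier_def is_act_def by (auto simp: mult.assoc)

lemma ext_is_act:
  assumes C: "is_act C act" and ext: "is_extension C act Sig D"
  shows "is_act D act \<and> C \<subseteq> D"
proof -
  obtain f where fD: "f ` sum_carrier C Sig = D"
    and fm: "\<forall>u\<in>sum_carrier C Sig. \<forall>s. f (sum_act act u s) = act (f u) s"
    and fc: "\<forall>c\<in>C. f (Inl c) = c"
    using ext unfolding is_extension_def by blast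
  have "C \<subseteq> D"
  proof
    fix c assume "c \<in> C"
    hence "Inl c \<in> sum_carrier C Sig" unfolding sum_carrier_def by auto
    thus "c \<in> D" using fD fc \<open>c \<in> C\<close> by force
  qed
  moreover have "is_act D act"
    unfolding is_act_def
  proof (intro conjI ballI allI)
    fix b s assume "b \<in> D"
    then obtain u where u: "u \<in> sum_carrier C Sig" "b = f u" using fD by blast
    have "act b s = f (sum_act act u s)" using u fm by simp
    thus "act b s \<in> D" using sum_act_closed[OF C u(1)] fD by blast
  next
    fix b assume "b \<in> D"
    then obtain u where u: "u \<in> sum_carrier C Sig" "b = f u" using fD by blast
    have "act b 1 = f (sum_act act u 1)" using u fm by simp
    thus "act b 1 = b" using sum_act_one[OF C u(1)] u by simp
  next
    fix b s t assume "b \<in> D"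
    then obtain u where u: "u \<in> sum_carrier C Sig" "b = f u" using fD by blast
    have "act b (s * t) = f (sum_act act u (s * t))" using u fm by simp
    also have "\<dots> = f (sum_act act (sum_act act u s) t)" using sum_act_mult[OF C u(1)] by simp
    also have "\<dots> = act (f (sum_act act u s)) t" using fm sum_act_closed[OF C u(1)] by blast
    also have "\<dots> = act (act b s) t" using u fm by simp
    finally show "act b (s * t) = act (act b s) t" .
  qed
  ultimately show ?thesis by blast
qed

lemma succ_step:
  assumes Aact: "is_act A act" and C: "is_act C act" and AC: "A \<subseteq> C" and r: "retr A act C r"
    and ext: "is_extension C act Sig D"
    and over: "eqns_over C Sig" and fin: "finite Sig"
    and pure: "finite (mapq r ` Sig) \<Longrightarrow> eqns_over A (mapq r ` Sig) \<Longrightarrow>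
        consistent A act (mapq r ` Sig) \<Longrightarrow> has_solution_in A act (mapq r ` Sig)"
  shows "\<exists>r'. retr A act D r' \<and> (\<forall>a\<in>C. r' a = r a)"
proof -
  let ?U = "sum_carrier C Sig"
  obtain f where fD: "f ` ?U = D"
    and fk: "\<forall>u\<in>?U. \<forall>v\<in>?U. f u = f v \<longleftrightarrow> (u, v) \<in> kappa C act Sig"
    and fm: "\<forall>u\<in>?U. \<forall>s. f (sum_act act u s) = act (f u) s"
    and fc: "\<forall>c\<in>C. f (Inl c) = c"
    using ext unfolding is_extension_def by blast
  have Dact: "is_act D act" and CD: "C \<subseteq> D" using ext_is_act[OF C ext] by auto
  have rA: "\<And>b. b \<in> C \<Longrightarrow> r b \<in> A" and rm: "\<And>b s. b \<in> C \<Longrightarrow> r (act b s) = act (r b) s"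
    and rid: "\<And>a. a \<in> A \<Longrightarrow> r a = a" using r unfolding retr_def by auto
  have Cc: "\<And>b s. b \<in> C \<Longrightarrow> act b s \<in> C" using C unfolding is_act_def by auto
  have Dc: "\<And>b s. b \<in> D \<Longrightarrow> act b s \<in> D" using Dact unfolding is_act_def by auto
  have Ac: "\<And>b s. b \<in> A \<Longrightarrow> act b s \<in> A" using Aact unfolding is_act_def by auto
  have InrU: "\<And>x w. x \<in> vars Sig \<Longrightarrow> Inr (x, w) \<in> ?U" unfolding sum_carrier_def by auto
  have InlU: "\<And>c. c \<in> C \<Longrightarrow> Inl c \<in> ?U" unfolding sum_carrier_def by auto
  define \<sigma> where "\<sigma> x = f (Inr (x, 1))" for x
  have \<sigma>act: "f (Inr (x, w)) = act (\<sigma> x) w" if "x \<in> vars Sig" for x w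
  proof -
    have "Inr (x, w) = sum_act act (Inr (x, 1)) w" by simp
    thus ?thesis using fm InrU[OF that] unfolding \<sigma>_def by metis
  qed
  have \<sigma>D: "\<sigma> x \<in> D" if "x \<in> vars Sig" for x
    unfolding \<sigma>_def using fD InrU[OF that] by blast
  have sol: "sat act \<sigma> id q" if "q \<in> Sig" for q
  proof (cases q)
    case (Eq_VV x u y v)
    have xy: "x \<in> vars Sig" "y \<in> vars Sig" using vars_sub[OF that] Eq_VV by auto
    have "(Inr (x, u), Inr (y, v)) \<in> kappa C act Sig" using gen_in_kappa[OF that] Eq_VV by simp
    hence "f (Inr (x, u)) = f (Inr (y, v))" using fk InrU xy by blast
    thus ?thesis using Eq_VV \<sigma>act xy by simp
  next
    case (Eq_VC x u c)
    have x: "x \<in> vars Sig" using vars_sub[OF that] Eq_VC by auto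
    have c: "c \<in> C" using over that Eq_VC unfolding eqns_over_def by auto
    have "(Inr (x, u), Inl c) \<in> kappa C act Sig" using gen_in_kappa[OF that] Eq_VC by simp
    hence "f (Inr (x, u)) = f (Inl c)" using fk InrU InlU x c by blast
    thus ?thesis using Eq_VC \<sigma>act x fc c by simp
  qed
  define \<rho> where "\<rho> b = (if b \<in> C then r b else b)" for b
  have key: "\<rho> (act (\<rho> b) t) = \<rho> (act b t)" if "b \<in> D" for b t
  proof (cases "b \<in> C")
    case True
    have "r b \<in> A" using rA True .
    hence "act (r b) t \<in> A" using Ac by blast
    moreover have "act (r b) t = r (act b t)" using rm True by simp
    ultimately show ?thesis using True AC Cc rid unfolding \<rho>_def by auto
  next
    case False thus ?thesis unfolding \<rho>_def by simp
  qed
  define E where "E = A \<union> (D - C)"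
  have \<rho>E: "\<rho> b \<in> E" if "b \<in> D" for b
    using that rA unfolding \<rho>_def E_def by auto
  have ED: "E \<subseteq> D" unfolding E_def using AC CD by auto
  have \<rho>id: "\<rho> b = b" if "b \<in> E" for b
    using that rid unfolding \<rho>_def E_def by auto
  define actE :: "'a + nat \<times> 'b \<Rightarrow> 'b \<Rightarrow> 'a + nat \<times> 'b" where
    "actE z s = (case z of Inl d \<Rightarrow> Inl (\<rho> (act d s)) | Inr p \<Rightarrow> Inr p)" for z s
  let ?Sig' = "mapq r ` Sig"
  have vS: "vars ?Sig' = vars Sig" by (rule vars_mapq)
  have fin': "finite ?Sig'" using fin by simp
  have over': "eqns_over A ?Sig'"
    unfolding eqns_over_def
  proof
    fix q assume "q \<in> ?Sig'"
    then obtain q0 where q0: "q0 \<in> Sig" "q = mapq r q0" by blast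
    show "eqn_consts q \<subseteq> A"
    proof (cases q0)
      case (Eq_VC x u c)
      have "c \<in> C" using over q0 Eq_VC unfolding eqns_over_def by auto
      thus ?thesis using q0 Eq_VC rA by simp
    qed (use q0 in simp)
  qed
  have EactE: "is_act (Inl ` E) actE"
    unfolding is_act_def
  proof (intro conjI ballI allI)
    fix z :: "'a + nat \<times> 'b" and s assume "z \<in> Inl ` E"
    then obtain d where d: "d \<in> E" "z = Inl d" by blast
    show "actE z s \<in> Inl ` E" using d ED Dc \<rho>E unfolding actE_def by auto
  next
    fix z :: "'a + nat \<times> 'b" assume "z \<in> Inl ` E"
    then obtain d where d: "d \<in> E" "z = Inl d" by blast
    have "act d 1 = d" using Dact d ED unfolding is_act_def by auto
    thus "actE z 1 = z" using d \<rho>id unfolding actE_def by simp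
  next
    fix z :: "'a + nat \<times> 'b" and s t assume "z \<in> Inl ` E"
    then obtain d where d: "d \<in> E" "z = Inl d" by blast
    have dD: "d \<in> D" using d ED by auto
    have "act d (s * t) = act (act d s) t" using Dact dD unfolding is_act_def by auto
    hence "\<rho> (act d (s * t)) = \<rho> (act (\<rho> (act d s)) t)" using key Dc dD by simp
    thus "actE z (s * t) = actE (actE z s) t" using d unfolding actE_def by simp
  qed
  have cons: "consistent A act ?Sig'"
    unfolding consistent_def
  proof (intro exI conjI)
    show "is_act (Inl ` E) actE" by (rule EactE)
    show "Inl ` A \<subseteq> Inl ` E" unfolding E_def by auto
    show "inj_on Inl A" by simp
    show "\<forall>c\<in>A. \<forall>s. Inl (act c s) = actE (Inl c) s"
    proof (intro ballI allI)
      fix c s assume "c \<in> A"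
      hence "act c s \<in> A" using Ac by blast
      hence "\<rho> (act c s) = act c s" using \<rho>id unfolding E_def by blast
      thus "Inl (act c s) = actE (Inl c) s" unfolding actE_def by simp
    qed
    show "\<forall>x\<in>vars ?Sig'. Inl (\<rho> (\<sigma> x)) \<in> Inl ` E" using vS \<sigma>D \<rho>E by auto
    show "\<forall>q\<in>?Sig'. sat actE (\<lambda>x. Inl (\<rho> (\<sigma> x))) Inl q"
    proof
      fix q assume "q \<in> ?Sig'"
      then obtain q0 where q0: "q0 \<in> Sig" "q = mapq r q0" by blast
      show "sat actE (\<lambda>x. Inl (\<rho> (\<sigma> x))) Inl q"
      proof (cases q0)
        case (Eq_VV x u y v)
        have xy: "x \<in> vars Sig" "y \<in> vars Sig" using vars_sub[OF q0(1)] q0 Eq_VV by auto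
        have "act (\<sigma> x) u = act (\<sigma> y) v" using sol[OF q0(1)] Eq_VV by simp
        thus ?thesis using q0 Eq_VV key \<sigma>D xy unfolding actE_def by simp
      next
        case (Eq_VC x u c)
        have x: "x \<in> vars Sig" using vars_sub[OF q0(1)] q0 Eq_VC by auto
        have c: "c \<in> C" using over q0 Eq_VC unfolding eqns_over_def by auto
        have "act (\<sigma> x) u = c" using sol[OF q0(1)] Eq_VC by simp
        hence "\<rho> (act (\<rho> (\<sigma> x)) u) = r c" using key \<sigma>D x c unfolding \<rho>_def by simp
        thus ?thesis using q0 Eq_VC unfolding actE_def by simp
      qed
    qed
  qed
  obtain \<tau> where \<tau>A: "\<forall>x\<in>vars ?Sig'. \<tau> x \<in> A" and \<tau>s: "\<forall>q\<in>?Sig'. sat act \<tau> id q"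
    using pure[OF fin' over' cons] unfolding has_solution_in_def by blast
  define g where "g u = (case u of Inl c \<Rightarrow> r c | Inr (x, w) \<Rightarrow> act (\<tau> x) w)" for u
  have gA: "g u \<in> A" if "u \<in> ?U" for u
    using that rA \<tau>A vS Ac unfolding sum_carrier_def g_def by auto
  have gm: "g (sum_act act u s) = act (g u) s" if "u \<in> ?U" for u s
  proof -
    { fix c assume "u = Inl c" "c \<in> C"
      hence ?thesis using rm unfolding g_def by simp }
    moreover
    { fix x w assume xw: "u = Inr (x, w)" "x \<in> vars Sig"
      hence "\<tau> x \<in> A" using \<tau>A vS by auto
      hence ?thesis using Aact xw unfolding g_def is_act_def by simp }
    ultimately show ?thesis using that unfolding sum_carrier_def by auto
  qed
  define K where "K = {(u, v). u \<in> ?U \<and> v \<in> ?U \<and> g u = g v}"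
  have Kc: "is_congruence ?U (sum_act act) K"
    unfolding is_congruence_def equiv_def refl_on_def sym_def trans_def K_def
    using gm sum_act_closed[OF C] by auto
  have genK: "gen_pair ` Sig \<subseteq> K"
  proof
    fix p assume "p \<in> gen_pair ` Sig"
    then obtain q where q: "q \<in> Sig" "p = gen_pair q" by blast
    have mq: "mapq r q \<in> ?Sig'" using q by blast
    have sq: "sat act \<tau> id (mapq r q)" using \<tau>s mq by blast
    show "p \<in> K"
    proof (cases q)
      case (Eq_VV x u y v)
      have xy: "x \<in> vars Sig" "y \<in> vars Sig" using vars_sub[OF q(1)] q Eq_VV by auto
      have "act (\<tau> x) u = act (\<tau> y) v" using sq Eq_VV by simp
      thus ?thesis using q Eq_VV xy InrU unfolding K_def g_def by simp
    next
      case (Eq_VC x u c)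
      have x: "x \<in> vars Sig" using vars_sub[OF q(1)] q Eq_VC by auto
      have c: "c \<in> C" using over q Eq_VC unfolding eqns_over_def by auto
      have "act (\<tau> x) u = r c" using sq Eq_VC by simp
      thus ?thesis using q Eq_VC x c InrU InlU unfolding K_def g_def by simp
    qed
  qed
  have kK: "kappa C act Sig \<subseteq> K"
    unfolding kappa_def using Kc genK by blast
  define r' where "r' b = g (SOME u. u \<in> ?U \<and> f u = b)" for b
  have r'f: "r' (f u) = g u" if "u \<in> ?U" for u
  proof -
    have ex: "\<exists>u'. u' \<in> ?U \<and> f u' = f u" using that by blast
    let ?u' = "SOME u'. u' \<in> ?U \<and> f u' = f u"
    have "?u' \<in> ?U \<and> f ?u' = f u" using someI_ex[OF ex] .
    hence "(?u', u) \<in> K" using fk that kK by blast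
    thus ?thesis unfolding r'_def K_def by simp
  qed
  show ?thesis
  proof (intro exI conjI)
    show "retr A act D r'"
      unfolding retr_def
    proof (intro conjI ballI allI)
      fix b assume "b \<in> D"
      then obtain u where u: "u \<in> ?U" "b = f u" using fD by blast
      show "r' b \<in> A" using u r'f gA by simp
    next
      fix b s assume "b \<in> D"
      then obtain u where u: "u \<in> ?U" "b = f u" using fD by blast
      have "act b s = f (sum_act act u s)" using u fm by simp
      thus "r' (act b s) = act (r' b) s"
        using r'f[OF sum_act_closed[OF C u(1)]] r'f[OF u(1)] gm[OF u(1)] u by simp
    next
      fix a assume "a \<in> A"
      hence "a \<in> C" using AC by blast
      thus "r' a = a" using r'f[OF InlU] fc rid \<open>a \<in> A\<close> unfolding g_def by force
    qed
    show "\<forall>a\<in>C. r' a = r a"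
      using r'f[OF InlU] fc unfolding g_def by force
  qed
qed


lemma glue:
  fixes Ai :: "'i::linorder \<Rightarrow> 'a set" and P :: "'i \<Rightarrow> bool" and R :: "'i \<Rightarrow> 'a \<Rightarrow> 'a"
  assumes ne: "\<exists>i. P i"
    and each: "\<And>i. P i \<Longrightarrow> is_act (Ai i) act \<and> A \<subseteq> Ai i \<and> retr A act (Ai i) (R i)"
    and coh: "\<And>i k. P i \<Longrightarrow> P k \<Longrightarrow> i \<le> k \<Longrightarrow> \<forall>a\<in>Ai i. R k a = R i a"
    and gdef: "g = (\<lambda>b. if \<exists>i. P i \<and> b \<in> Ai i then R (SOME i. P i \<and> b \<in> Ai i) b else b)"
  shows "is_act (\<Union>i\<in>{i. P i}. Ai i) act \<and> A \<subseteq> (\<Union>i\<in>{i. P i}. Ai i) \<and>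
         retr A act (\<Union>i\<in>{i. P i}. Ai i) g \<and> (\<forall>i. P i \<longrightarrow> (\<forall>a\<in>Ai i. g a = R i a))"
proof -
  have agree: "g a = R i a" if "P i" "a \<in> Ai i" for i a
  proof -
    have ex: "\<exists>k. P k \<and> a \<in> Ai k" using that by blast
    let ?k = "SOME k. P k \<and> a \<in> Ai k"
    have k: "P ?k \<and> a \<in> Ai ?k" using someI_ex[OF ex] .
    have "g a = R ?k a" using gdef ex by simp
    also have "\<dots> = R i a"
    proof (cases "i \<le> ?k")
      case True thus ?thesis using coh[of i ?k] that k by blast
    next
      case False hence "?k \<le> i" by simp
      thus ?thesis using coh[of ?k i] that k by metis
    qed
    finally show ?thesis .
  qed
  obtain i0 where i0: "P i0" using ne by blast
  have isact: "is_act (\<Union>i\<in>{i. P i}. Ai i) act"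
    unfolding is_act_def
  proof (intro conjI ballI allI)
    fix b s assume "b \<in> (\<Union>i\<in>{i. P i}. Ai i)"
    then obtain i where "P i" "b \<in> Ai i" by blast
    thus "act b s \<in> (\<Union>i\<in>{i. P i}. Ai i)" using each[of i] unfolding is_act_def by blast
  next
    fix b assume "b \<in> (\<Union>i\<in>{i. P i}. Ai i)"
    then obtain i where "P i" "b \<in> Ai i" by blast
    thus "act b 1 = b" using each[of i] unfolding is_act_def by blast
  next
    fix b s t assume "b \<in> (\<Union>i\<in>{i. P i}. Ai i)"
    then obtain i where "P i" "b \<in> Ai i" by blast
    thus "act b (s * t) = act (act b s) t" using each[of i] unfolding is_act_def by blast
  qed
  have rt: "retr A act (\<Union>i\<in>{i. P i}. Ai i) g"
    unfolding retr_def
  proof (intro conjI ballI allI)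
    fix b assume "b \<in> (\<Union>i\<in>{i. P i}. Ai i)"
    then obtain i where i: "P i" "b \<in> Ai i" by blast
    thus "g b \<in> A" using agree each[of i] unfolding retr_def by auto
  next
    fix b s assume "b \<in> (\<Union>i\<in>{i. P i}. Ai i)"
    then obtain i where i: "P i" "b \<in> Ai i" by blast
    have "act b s \<in> Ai i" using each[OF i(1)] i(2) unfolding is_act_def by blast
    hence "g (act b s) = R i (act b s)" using agree i by blast
    also have "\<dots> = act (R i b) s" using each[OF i(1)] i(2) unfolding retr_def by blast
    also have "\<dots> = act (g b) s" using agree i by simp
    finally show "g (act b s) = act (g b) s" .
  next
    fix a assume "a \<in> A"
    hence "a \<in> Ai i0" using each[OF i0] by blast
    thus "g a = a" using agree[OF i0] each[OF i0] \<open>a \<in> A\<close> unfolding retr_def by auto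
  qed
  show ?thesis using isact rt agree each[OF i0] i0 by blast
qed

definition isucc :: "'i::wellorder \<Rightarrow> 'i \<Rightarrow> bool" where
  "isucc i j \<longleftrightarrow> i < j \<and> (\<forall>k. i < k \<longrightarrow> j \<le> k)"

lemma isucc_unique: "isucc i j \<Longrightarrow> isucc i' j \<Longrightarrow> i = i'"
  unfolding isucc_def by (metis leD linorder_neqE)

definition extR :: "'a set \<Rightarrow> ('a \<Rightarrow> 's \<Rightarrow> 'a) \<Rightarrow> ('i \<Rightarrow> 'a set) \<Rightarrow> ('a \<Rightarrow> 'a) \<Rightarrow> 'i \<Rightarrow> 'i \<Rightarrow> ('a \<Rightarrow> 'a)" where
  "extR A act Ai r i j = (SOME r'. retr A act (Ai j) r' \<and> (\<forall>a\<in>Ai i. r' a = r a))"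

definition Hs :: "'a set \<Rightarrow> ('a \<Rightarrow> 's \<Rightarrow> 'a) \<Rightarrow> ('i::wellorder \<Rightarrow> 'a set) \<Rightarrow> ('i \<Rightarrow> 'a \<Rightarrow> 'a) \<Rightarrow> 'i \<Rightarrow> 'a \<Rightarrow> 'a" where
  "Hs A act Ai rec j = (if (\<forall>i. j \<le> i) then id
     else if (\<exists>i. isucc i j) then extR A act Ai (rec (THE i. isucc i j)) (THE i. isucc i j) j
     else (\<lambda>b. if \<exists>i. i < j \<and> b \<in> Ai i then rec (SOME i. i < j \<and> b \<in> Ai i) b else b))"

definition Rr :: "'a set \<Rightarrow> ('a \<Rightarrow> 's \<Rightarrow> 'a) \<Rightarrow> ('i::wellorder \<Rightarrow> 'a set) \<Rightarrow> 'i \<Rightarrow> 'a \<Rightarrow> 'a" where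
  "Rr A act Ai = wfrec {(x, y). x < y} (Hs A act Ai)"

lemma Hs_cut: "Hs A act Ai (cut f {(x, y). x < y} j) j = Hs A act Ai f j"
proof -
  have c: "\<And>y. y < j \<Longrightarrow> cut f {(x, y). x < y} j y = f y" by (simp add: cut_apply)
  show ?thesis
  proof (cases "\<forall>i. j \<le> i")
    case True thus ?thesis unfolding Hs_def by simp
  next
    case nl: False
    show ?thesis
    proof (cases "\<exists>i. isucc i j")
      case True
      hence "isucc (THE i. isucc i j) j" using isucc_unique by (metis theI)
      hence lt: "(THE i. isucc i j) < j" unfolding isucc_def by blast
      show ?thesis unfolding Hs_def if_not_P[OF nl] if_P[OF True] using c[OF lt] by simp
    next
      case False
      have "(\<lambda>b. if \<exists>i. i < j \<and> b \<in> Ai i then cut f {(x, y). x < y} j (SOME i. i < j \<and> b \<in> Ai i) b else b)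
          = (\<lambda>b. if \<exists>i. i < j \<and> b \<in> Ai i then f (SOME i. i < j \<and> b \<in> Ai i) b else b)"
      proof
        fix b show "(if \<exists>i. i < j \<and> b \<in> Ai i then cut f {(x, y). x < y} j (SOME i. i < j \<and> b \<in> Ai i) b else b)
          = (if \<exists>i. i < j \<and> b \<in> Ai i then f (SOME i. i < j \<and> b \<in> Ai i) b else b)"
        proof (cases "\<exists>i. i < j \<and> b \<in> Ai i")
          case True
          hence "(SOME i. i < j \<and> b \<in> Ai i) < j" by (metis (mono_tags, lifting) someI_ex)
          thus ?thesis using True c by simp
        next
          case False thus ?thesis by (simp only: if_False)
        qed
      qed
      thus ?thesis unfolding Hs_def if_not_P[OF nl] if_not_P[OF False] .
    qed
  qed
qed

lemma Rr_eq: "Rr A act Ai j = Hs A act Ai (Rr A act Ai) j"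
proof -
  have "Rr A act Ai j = Hs A act Ai (cut (Rr A act Ai) {(x, y). x < y} j) j"
    by (rule def_wfrec[OF Rr_def[THEN eq_reflection] wellorder_class.wf])
  thus ?thesis using Hs_cut by metis
qed


lemma invariant:
  fixes A :: "'a set" and act :: "'a \<Rightarrow> 's::monoid_mult \<Rightarrow> 'a" and Ai :: "'i::wellorder \<Rightarrow> 'a set"
  assumes Aact: "is_act A act" and ch: "built_chain ok A B act Ai"
    and okv: "\<And>S1 S2. vars S1 = vars S2 \<Longrightarrow> ok S1 \<Longrightarrow> ok S2"
    and pure: "\<And>Sig. finite Sig \<Longrightarrow> eqns_over A Sig \<Longrightarrow> ok Sig \<Longrightarrow> consistent A act Sig \<Longrightarrow> has_solution_in A act Sig"
  shows "is_act (Ai j) act \<and> A \<subseteq> Ai j \<and> retr A act (Ai j) (Rr A act Ai j) \<and>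
         (\<forall>i\<le>j. Ai i \<subseteq> Ai j \<and> (\<forall>a\<in>Ai i. Rr A act Ai j a = Rr A act Ai i a))"
proof (induction j rule: less_induct)
  case (less j)
  let ?R = "Rr A act Ai"
  have ch1: "\<And>i. (\<forall>j. i \<le> j) \<Longrightarrow> Ai i = A" using ch unfolding built_chain_def by blast
  have ch2: "\<And>i j. i < j \<Longrightarrow> (\<forall>k. i < k \<longrightarrow> j \<le> k) \<Longrightarrow>
        (\<exists>Sig. finite Sig \<and> ok Sig \<and> eqns_over (Ai i) Sig \<and> consistent (Ai i) act Sig \<and>
               is_extension (Ai i) act Sig (Ai j))" using ch unfolding built_chain_def by blast
  have ch3: "\<And>j. (\<exists>i. i < j) \<Longrightarrow> (\<forall>i<j. \<exists>k. i < k \<and> k < j) \<Longrightarrow> Ai j = (\<Union>i\<in>{i. i < j}. Ai i)"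
    using ch unfolding built_chain_def by blast
  show ?case
  proof (cases "\<forall>i. j \<le> i")
    case True
    have Rj: "?R j = id" using Rr_eq[of A act Ai j] True unfolding Hs_def by simp
    have Aj: "Ai j = A" using ch1 True by blast
    have "\<forall>i\<le>j. i = j" using True by (metis order.antisym)
    thus ?thesis using Aj Rj Aact unfolding retr_def by auto
  next
    case nl: False
    show ?thesis
    proof (cases "\<exists>i. isucc i j")
      case True
      define i0 where "i0 = (THE i. isucc i j)"
      have su: "isucc i0 j" unfolding i0_def using True isucc_unique by (metis theI)
      have lt: "i0 < j" using su unfolding isucc_def by blast
      have Rj: "?R j = extR A act Ai (?R i0) i0 j"
        using Rr_eq[of A act Ai j] unfolding Hs_def if_not_P[OF nl] if_P[OF True] i0_def .
      have IH: "is_act (Ai i0) act \<and> A \<subseteq> Ai i0 \<and> retr A act (Ai i0) (?R i0) \<and>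
         (\<forall>i\<le>i0. Ai i \<subseteq> Ai i0 \<and> (\<forall>a\<in>Ai i. ?R i0 a = ?R i a))" by (rule less.IH[OF lt])
      obtain Sig where Sig: "finite Sig" "ok Sig" "eqns_over (Ai i0) Sig" "is_extension (Ai i0) act Sig (Ai j)"
        using ch2[OF lt] su unfolding isucc_def by blast
      have okm: "ok (mapq (?R i0) ` Sig)" using okv[OF _ Sig(2)] vars_mapq by metis
      have ex: "\<exists>r'. retr A act (Ai j) r' \<and> (\<forall>a\<in>Ai i0. r' a = ?R i0 a)"
        using succ_step[OF Aact _ _ _ Sig(4) Sig(3) Sig(1)] IH pure okm by blast
      have Rjp: "retr A act (Ai j) (?R j) \<and> (\<forall>a\<in>Ai i0. ?R j a = ?R i0 a)"
        unfolding Rj extR_def using someI_ex[OF ex] .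
      have Ej: "is_act (Ai j) act \<and> Ai i0 \<subseteq> Ai j" using ext_is_act[OF _ Sig(4)] IH by blast
      have below: "\<forall>i\<le>j. Ai i \<subseteq> Ai j \<and> (\<forall>a\<in>Ai i. ?R j a = ?R i a)"
      proof (intro allI impI)
        fix i assume "i \<le> j"
        show "Ai i \<subseteq> Ai j \<and> (\<forall>a\<in>Ai i. ?R j a = ?R i a)"
        proof (cases "i = j")
          case False
          hence "i < j" using \<open>i \<le> j\<close> by simp
          hence ii0: "i \<le> i0" using su unfolding isucc_def by (meson leD not_le_imp_less)
          have s1: "Ai i \<subseteq> Ai i0" and e1: "\<forall>a\<in>Ai i. ?R i0 a = ?R i a" using IH ii0 by auto
          have "\<forall>a\<in>Ai i. ?R j a = ?R i a"
          proof
            fix a assume "a \<in> Ai i"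
            hence "a \<in> Ai i0" using s1 by blast
            hence "?R j a = ?R i0 a" using Rjp by blast
            thus "?R j a = ?R i a" using e1 \<open>a \<in> Ai i\<close> by simp
          qed
          thus ?thesis using s1 Ej by blast
        qed simp
      qed
      show ?thesis using Ej IH Rjp below by blast
    next
      case False
      have ex: "\<exists>i. i < j" using nl by (meson not_le_imp_less)
      have lim: "\<forall>i<j. \<exists>k. i < k \<and> k < j"
      proof (intro allI impI)
        fix i assume "i < j"
        show "\<exists>k. i < k \<and> k < j"
        proof (rule ccontr)
          assume "\<not> (\<exists>k. i < k \<and> k < j)"
          hence "isucc i j" using \<open>i < j\<close> unfolding isucc_def by (meson not_le_imp_less)
          thus False using False by blast
        qed
      qed
      have Aj: "Ai j = (\<Union>i\<in>{i. i < j}. Ai i)" using ch3[OF ex lim] .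
      have Rj: "?R j = (\<lambda>b. if \<exists>i. i < j \<and> b \<in> Ai i then ?R (SOME i. i < j \<and> b \<in> Ai i) b else b)"
        using Rr_eq[of A act Ai j] unfolding Hs_def if_not_P[OF nl] if_not_P[OF False] .
      have G: "is_act (\<Union>i\<in>{i. i < j}. Ai i) act \<and> A \<subseteq> (\<Union>i\<in>{i. i < j}. Ai i) \<and>
         retr A act (\<Union>i\<in>{i. i < j}. Ai i) (?R j) \<and> (\<forall>i. i < j \<longrightarrow> (\<forall>a\<in>Ai i. ?R j a = ?R i a))"
      proof (rule glue[OF ex])
        fix i assume "i < j"
        from less.IH[OF this]
        show "is_act (Ai i) act \<and> A \<subseteq> Ai i \<and> retr A act (Ai i) (?R i)" by (elim conjE) (intro conjI)
      next
        fix i k assume "i < j" "k < j" "i \<le> k"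
        from less.IH[OF \<open>k < j\<close>] \<open>i \<le> k\<close>
        show "\<forall>a\<in>Ai i. ?R k a = ?R i a" by blast
      next
        show "?R j = (\<lambda>b. if \<exists>i. i < j \<and> b \<in> Ai i then ?R (SOME i. i < j \<and> b \<in> Ai i) b else b)"
          by (rule Rj)
      qed
      have below: "\<forall>i\<le>j. Ai i \<subseteq> Ai j \<and> (\<forall>a\<in>Ai i. ?R j a = ?R i a)"
      proof (intro allI impI)
        fix i assume "i \<le> j"
        show "Ai i \<subseteq> Ai j \<and> (\<forall>a\<in>Ai i. ?R j a = ?R i a)"
        proof (cases "i = j")
          case False
          hence "i < j" using \<open>i \<le> j\<close> by simp
          thus ?thesis using G Aj by blast
        qed simp
      qed
      show ?thesis using G Aj below by simp
    qed
  qed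
qed

lemma built_retract:
  fixes A :: "'a set" and act :: "'a \<Rightarrow> 's::monoid_mult \<Rightarrow> 'a" and Ai :: "'i::wellorder \<Rightarrow> 'a set"
  assumes Aact: "is_act A act" and ch: "built_chain ok A B act Ai"
    and okv: "\<And>S1 S2. vars S1 = vars S2 \<Longrightarrow> ok S1 \<Longrightarrow> ok S2"
    and pure: "\<And>Sig. finite Sig \<Longrightarrow> eqns_over A Sig \<Longrightarrow> ok Sig \<Longrightarrow> consistent A act Sig \<Longrightarrow> has_solution_in A act Sig"
  shows "is_retract A B act"
proof -
  let ?R = "Rr A act Ai"
  define g where "g = (\<lambda>b. if \<exists>i. True \<and> b \<in> Ai i then ?R (SOME i. True \<and> b \<in> Ai i) b else b)"
  have inv: "\<And>j. is_act (Ai j) act \<and> A \<subseteq> Ai j \<and> retr A act (Ai j) (?R j) \<and>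
         (\<forall>i\<le>j. Ai i \<subseteq> Ai j \<and> (\<forall>a\<in>Ai i. ?R j a = ?R i a))"
    by (rule invariant[OF Aact ch okv pure])
  have G: "is_act (\<Union>i\<in>{i. True}. Ai i) act \<and> A \<subseteq> (\<Union>i\<in>{i. True}. Ai i) \<and>
         retr A act (\<Union>i\<in>{i. True}. Ai i) g \<and> (\<forall>i. True \<longrightarrow> (\<forall>a\<in>Ai i. g a = ?R i a))"
  proof (rule glue[where R = ?R])
    fix i
    from inv[of i] show "is_act (Ai i) act \<and> A \<subseteq> Ai i \<and> retr A act (Ai i) (?R i)" by (elim conjE) (intro conjI)
  next
    fix i k :: 'i assume "i \<le> k"
    with inv[of k] show "\<forall>a\<in>Ai i. ?R k a = ?R i a" by blast
  qed (simp_all add: g_def)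
  have "B = (\<Union>i\<in>{i. True}. Ai i)" using ch unfolding built_chain_def by auto
  hence "retr A act B g" using G by simp
  thus ?thesis unfolding retr_def is_retract_def by blast
qed

theorem mainTheorem14:
  fixes n :: nat and A B :: "'a set" and act :: "'a \<Rightarrow> 's::monoid_mult \<Rightarrow> 'a"
    and Ai :: "'i::wellorder \<Rightarrow> 'a set"
  assumes "is_act A act"
  shows "(n_absolutely_pure n A act \<and> n_built_chain n A B act Ai \<longrightarrow> is_retract A B act) \<and>
         (absolutely_pure A act \<and> any_built_chain A B act Ai \<longrightarrow> is_retract A B act)"
proof (intro conjI impI)
  assume h: "n_absolutely_pure n A act \<and> n_built_chain n A B act Ai"
  show "is_retract A B act"
  proof (rule built_retract[OF assms, where ok = "\<lambda>Sig. card (vars Sig) \<le> n"])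
    show "built_chain (\<lambda>Sig. card (vars Sig) \<le> n) A B act Ai" using h unfolding n_built_chain_def by simp
    show "\<And>S1 S2. vars S1 = vars S2 \<Longrightarrow> card (vars S1) \<le> n \<Longrightarrow> card (vars S2) \<le> n" by simp
    show "\<And>Sig. finite Sig \<Longrightarrow> eqns_over A Sig \<Longrightarrow> card (vars Sig) \<le> n \<Longrightarrow> consistent A act Sig \<Longrightarrow> has_solution_in A act Sig"
      using h unfolding n_absolutely_pure_def by blast
  qed
next
  assume h: "absolutely_pure A act \<and> any_built_chain A B act Ai"
  show "is_retract A B act"
  proof (rule built_retract[OF assms, where ok = "\<lambda>Sig. True"])
    show "built_chain (\<lambda>Sig. True) A B act Ai" using h unfolding any_built_chain_def by simp
    show "\<And>S1 S2. vars S1 = vars S2 \<Longrightarrow> True \<Longrightarrow> True" by simp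
    show "\<And>Sig. finite Sig \<Longrightarrow> eqns_over A Sig \<Longrightarrow> True \<Longrightarrow> consistent A act Sig \<Longrightarrow> has_solution_in A act Sig"
      using h unfolding absolutely_pure_def n_absolutely_pure_def by blast
  qed
qed

end
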